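(* Let $P$ and $Q$ be finite posets with height functions $g$ and $h$ respectively. Give $P\times Q$ (product order) the height function $(a,b)\mapsto g(a)+h(b)$, and the disjoint union $P\sqcup Q$ the height function $g\sqcup h$ equal to $g$ on $P$ and $h$ on $Q$. Then $\mathsf{Z}_{P\times Q,g+h}=\mathsf{Z}_{P,g}\,\mathsf{Z}_{Q,h}$ and $\mathsf{Z}_{P\sqcup Q,g\sqcup h}=\mathsf{Z}_{P,g}+\mathsf{Z}_{Q,h}$.
   Context: $q$ is an indeterminate; $[n]_q=(q^n-1)/(q-1)$. A height function on a finite poset $R$ is $h:R\to\mathbb{N}$ with $h(x)<h(y)$ whenever $y$ covers $x$. The $q$-Zeta polynomial $\mathsf{Z}_{R,h}\in\mathbb{Q}(q)[x]$ is the unique polynomial with $\mathsf{Z}_{R,h}([n]_q)=\sum_{e_1\le\cdots\le e_{n-1}\text{ in }R}q^{h(e_1)+\cdots+h(e_{n-1})}$ for all integers $n\ge2$ (such a polynomial exists). *)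

theory Defs
  imports "HOL-Computational_Algebra.Polynomial" "HOL-Computational_Algebra.Fraction_Field"
    "HOL-Library.FuncSet"
begin

type_synonym qfield = "rat poly fract"

definition qvar :: qfield where
  "qvar = Fract [:0, 1:] 1"

definition qint :: "nat \<Rightarrow> qfield" where
  "qint n = (qvar ^ n - 1) / (qvar - 1)"

definition finite_poset :: "'a set \<Rightarrow> ('a \<Rightarrow> 'a \<Rightarrow> bool) \<Rightarrow> bool" where
  "finite_poset A le \<longleftrightarrow> finite A \<and>
     (\<forall>x\<in>A. le x x) \<and>
     (\<forall>x\<in>A. \<forall>y\<in>A. le x y \<and> le y x \<longrightarrow> x = y) \<and>
     (\<forall>x\<in>A. \<forall>y\<in>A. \<forall>z\<in>A. le x y \<and> le y z \<longrightarrow> le x z)"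

definition covers :: "'a set \<Rightarrow> ('a \<Rightarrow> 'a \<Rightarrow> bool) \<Rightarrow> 'a \<Rightarrow> 'a \<Rightarrow> bool" where
  "covers A le y x \<longleftrightarrow> x \<in> A \<and> y \<in> A \<and> le x y \<and> x \<noteq> y \<and>
     \<not> (\<exists>z\<in>A. le x z \<and> le z y \<and> z \<noteq> x \<and> z \<noteq> y)"

definition height_function :: "'a set \<Rightarrow> ('a \<Rightarrow> 'a \<Rightarrow> bool) \<Rightarrow> ('a \<Rightarrow> nat) \<Rightarrow> bool" where
  "height_function A le h \<longleftrightarrow> (\<forall>x\<in>A. \<forall>y\<in>A. covers A le y x \<longrightarrow> h x < h y)"

definition multichains :: "'a set \<Rightarrow> ('a \<Rightarrow> 'a \<Rightarrow> bool) \<Rightarrow> nat \<Rightarrow> (nat \<Rightarrow> 'a) set" where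
  "multichains A le m = {e \<in> {..<m} \<rightarrow>\<^sub>E A. \<forall>i. Suc i < m \<longrightarrow> le (e i) (e (Suc i))}"

definition chain_gen :: "'a set \<Rightarrow> ('a \<Rightarrow> 'a \<Rightarrow> bool) \<Rightarrow> ('a \<Rightarrow> nat) \<Rightarrow> nat \<Rightarrow> qfield" where
  "chain_gen A le h n = (\<Sum>e\<in>multichains A le (n - 1). qvar ^ (\<Sum>i<n - 1. h (e i)))"

definition qZeta :: "'a set \<Rightarrow> ('a \<Rightarrow> 'a \<Rightarrow> bool) \<Rightarrow> ('a \<Rightarrow> nat) \<Rightarrow> qfield poly" where
  "qZeta A le h = (THE Z. \<forall>n\<ge>2. poly Z (qint n) = chain_gen A le h n)"

definition prod_le :: "('a \<Rightarrow> 'a \<Rightarrow> bool) \<Rightarrow> ('b \<Rightarrow> 'b \<Rightarrow> bool) \<Rightarrow> 'a \<times> 'b \<Rightarrow> 'a \<times> 'b \<Rightarrow> bool" where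
  "prod_le le1 le2 x y \<longleftrightarrow> le1 (fst x) (fst y) \<and> le2 (snd x) (snd y)"

fun sum_le :: "('a \<Rightarrow> 'a \<Rightarrow> bool) \<Rightarrow> ('b \<Rightarrow> 'b \<Rightarrow> bool) \<Rightarrow> 'a + 'b \<Rightarrow> 'a + 'b \<Rightarrow> bool" where
  "sum_le le1 le2 (Inl a) (Inl a') = le1 a a'"
| "sum_le le1 le2 (Inr b) (Inr b') = le2 b b'"
| "sum_le le1 le2 _ _ = False"

end

theory Submission
  imports Defs
begin

lemma qvar_pow: "qvar ^ n = Fract ([:0,1:] ^ n) 1"
  by (induction n) (simp_all add: qvar_def One_fract_def)

lemma qvar_pow_inj: "qvar ^ m = qvar ^ n \<Longrightarrow> m = n"
proof -
  assume "qvar ^ m = qvar ^ n"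
  hence "([:0,1:] ^ m :: rat poly) = [:0,1:] ^ n" by (simp add: qvar_pow eq_fract)
  hence "degree ([:0,1:] ^ m :: rat poly) = degree ([:0,1:] ^ n :: rat poly)" by simp
  thus "m = n" using degree_linear_power[of "0::rat"] by simp
qed

lemma qvar_nz: "qvar \<noteq> 0"
  using qvar_pow_inj[of 1 2] by auto

lemma qvar_n1: "qvar \<noteq> 1"
  using qvar_pow_inj[of 1 0] by auto

lemma qint_pow: "(qvar - 1) * qint n + 1 = qvar ^ n"
  using qvar_n1 by (simp add: qint_def)

lemma qint_inj: "qint m = qint n \<Longrightarrow> m = n"
  by (metis qint_pow qvar_pow_inj)

lemma qint_pred: "n \<ge> 1 \<Longrightarrow> poly [: 1/qvar, (qvar - 1)/qvar :] (qint n) = qvar ^ (n - 1)"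
proof -
  assume "n \<ge> 1"
  then obtain k where n: "n = Suc k" by (cases n) auto
  have "poly [: 1/qvar, (qvar - 1)/qvar :] (qint n) = ((qvar - 1) * qint n + 1) / qvar"
    using qvar_nz by (simp add: field_simps)
  also have "\<dots> = qvar ^ (n - 1)" unfolding qint_pow using qvar_nz n by simp
  finally show ?thesis .
qed

lemma poly_unique:
  assumes "\<forall>n\<ge>2. poly Z1 (qint n) = poly Z2 (qint n)"
  shows "Z1 = Z2"
proof (rule ccontr)
  assume "Z1 \<noteq> Z2"
  hence "Z1 - Z2 \<noteq> 0" by simp
  hence fin: "finite {x. poly (Z1 - Z2) x = 0}" by (rule poly_roots_finite)
  have "qint ` {2..} \<subseteq> {x. poly (Z1 - Z2) x = 0}" using assms by auto
  moreover have "infinite (qint ` {2..})"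
    using finite_imageD[of qint "{2::nat..}"] qint_inj inj_on_def by (metis infinite_Ici)
  ultimately show False using fin finite_subset by blast
qed

lemma qZeta_eq:
  assumes "\<forall>n\<ge>2. poly Z (qint n) = chain_gen A le h n"
  shows "qZeta A le h = Z"
  unfolding qZeta_def
proof (rule the_equality)
  show "\<forall>n\<ge>2. poly Z (qint n) = chain_gen A le h n" by fact
  fix Z' assume "\<forall>n\<ge>2. poly Z' (qint n) = chain_gen A le h n"
  thus "Z' = Z" using assms poly_unique by metis
qed

definition Fm :: "'a set \<Rightarrow> ('a\<Rightarrow>'a\<Rightarrow>bool) \<Rightarrow> ('a\<Rightarrow>nat) \<Rightarrow> nat \<Rightarrow> qfield" where
  "Fm A le h m = (\<Sum>e\<in>multichains A le m. qvar ^ (\<Sum>i<m. h (e i)))"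

lemma chain_gen_Fm: "chain_gen A le h n = Fm A le h (n - 1)"
  by (simp add: chain_gen_def Fm_def)

definition expo :: "nat \<Rightarrow> (nat \<Rightarrow> qfield) \<Rightarrow> bool" where
  "expo B f \<longleftrightarrow> (\<exists>c. \<forall>m\<ge>1. f m = (\<Sum>s<B. c s * qvar ^ (s * m)))"

lemma expo_poly:
  assumes "expo B f"
  shows "\<exists>Z. \<forall>n\<ge>2. poly Z (qint n) = f (n - 1)"
proof -
  obtain c where c: "\<forall>m\<ge>1. f m = (\<Sum>s<B. c s * qvar ^ (s * m))" using assms(1) unfolding expo_def by blast
  define L where "L = [: 1/qvar, (qvar - 1)/qvar :]"
  show ?thesis
  proof (intro exI allI impI)
    fix n :: nat assume n: "n \<ge> 2"
    have "poly (\<Sum>s<B. smult (c s) (L ^ s)) (qint n) = (\<Sum>s<B. c s * (qvar ^ (n - 1)) ^ s)"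
      using qint_pred[of n] n by (simp add: poly_sum L_def)
    also have "\<dots> = f (n - 1)" using c n by (simp add: power_mult mult.commute)
    finally show "poly (\<Sum>s<B. smult (c s) (L ^ s)) (qint n) = f (n - 1)" .
  qed
qed

lemma expo_mono:
  assumes "expo B f" "B \<le> B'" shows "expo B' f"
proof -
  obtain c where c: "\<forall>m\<ge>1. f m = (\<Sum>s<B. c s * qvar ^ (s * m))" using assms(1) unfolding expo_def by blast
  define c' where "c' s = (if s < B then c s else 0)" for s
  have "(\<Sum>s<B'. c' s * qvar ^ (s * m)) = (\<Sum>s<B. c s * qvar ^ (s * m))" for m
  proof -
    have "(\<Sum>s<B'. c' s * qvar ^ (s * m)) = (\<Sum>s<B. c' s * qvar ^ (s * m))"
      by (rule sum.mono_neutral_right) (use assms(2) in \<open>auto simp: c'_def\<close>)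
    also have "\<dots> = (\<Sum>s<B. c s * qvar ^ (s * m))"
      by (rule sum.cong) (auto simp: c'_def)
    finally show ?thesis .
  qed
  hence "\<forall>m\<ge>1. f m = (\<Sum>s<B'. c' s * qvar ^ (s * m))" using c by simp
  thus ?thesis unfolding expo_def by (rule exI[where x=c'])
qed

lemma expo_add:
  assumes "expo B f" "expo B g" shows "expo B (\<lambda>m. f m + g m)"
proof -
  obtain c where c: "\<forall>m\<ge>1. f m = (\<Sum>s<B. c s * qvar ^ (s * m))" using assms(1) unfolding expo_def by blast
  obtain d where d: "\<forall>m\<ge>1. g m = (\<Sum>s<B. d s * qvar ^ (s * m))" using assms(2) unfolding expo_def by blast
  have "f m + g m = (\<Sum>s<B. (c s + d s) * qvar ^ (s * m))" if m: "m \<ge> 1" for m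
  proof -
    have "f m + g m = (\<Sum>s<B. c s * qvar ^ (s * m)) + (\<Sum>s<B. d s * qvar ^ (s * m))"
      using c d m by presburger
    also have "\<dots> = (\<Sum>s<B. c s * qvar ^ (s * m) + d s * qvar ^ (s * m))"
      by (rule sum.distrib[symmetric])
    also have "\<dots> = (\<Sum>s<B. (c s + d s) * qvar ^ (s * m))"
      by (rule sum.cong) (simp_all add: distrib_right)
    finally show ?thesis .
  qed
  hence "\<forall>m\<ge>1. f m + g m = (\<Sum>s<B. (c s + d s) * qvar ^ (s * m))" by blast
  thus ?thesis unfolding expo_def by (rule exI[where x="\<lambda>s. c s + d s"])
qed

lemma expo_single:
  assumes "s < B" shows "expo B (\<lambda>m. a * qvar ^ (s * m))"
proof -
  have "(\<Sum>t<B. (if t = s then a else 0) * qvar ^ (t * m)) = a * qvar ^ (s * m)" for m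
  proof -
    have "(\<Sum>t<B. (if t = s then a else 0) * qvar ^ (t * m)) = (\<Sum>t<B. if t = s then a * qvar ^ (t * m) else 0)"
      by (rule sum.cong) auto
    also have "\<dots> = a * qvar ^ (s * m)" using assms by (simp add: sum.delta')
    finally show ?thesis .
  qed
  hence "\<forall>m\<ge>1. a * qvar ^ (s * m) = (\<Sum>t<B. (if t = s then a else 0) * qvar ^ (t * m))"
    by simp
  thus ?thesis unfolding expo_def by (rule exI[where x="\<lambda>t. if t = s then a else 0"])
qed



lemma mc_finite: "finite A \<Longrightarrow> finite (multichains A le m)"
  unfolding multichains_def by (rule finite_subset[OF _ finite_PiE[of "{..<m}" "\<lambda>_. A"]]) auto

lemma mc_0: "multichains A le 0 = {\<lambda>_. undefined}"
  unfolding multichains_def by auto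

lemma Fm_0: "Fm A le h 0 = 1"
  by (simp add: Fm_def mc_0)

lemma Fm_empty: "m \<ge> 1 \<Longrightarrow> Fm {} le h m = 0"
proof -
  assume m: "m \<ge> 1"
  have "multichains {} le m = {}"
  proof (rule ccontr)
    assume "multichains {} le m \<noteq> {}"
    then obtain e where "e \<in> multichains {} le m" by auto
    hence "e 0 \<in> {}" using m unfolding multichains_def by (auto simp: PiE_iff)
    thus False by simp
  qed
  thus ?thesis by (simp add: Fm_def)
qed

lemma mc_trans:
  assumes refl: "\<forall>x\<in>A. le x x"
    and trans: "\<forall>x\<in>A. \<forall>y\<in>A. \<forall>z\<in>A. le x y \<and> le y z \<longrightarrow> le x z"
    and e: "e \<in> multichains A le m" and ij: "i \<le> j" "j < m"
  shows "le (e i) (e j)"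
  using ij
proof (induction j)
  case 0 thus ?case using e refl unfolding multichains_def by auto
next
  case (Suc j)
  show ?case
  proof (cases "i = Suc j")
    case True thus ?thesis using e refl Suc.prems unfolding multichains_def by auto
  next
    case False
    hence "le (e i) (e j)" using Suc by auto
    moreover have "le (e j) (e (Suc j))" using e Suc.prems unfolding multichains_def by auto
    moreover have "e i \<in> A" "e j \<in> A" "e (Suc j) \<in> A" using e Suc.prems unfolding multichains_def by auto
    ultimately show ?thesis using trans by blast
  qed
qed

lemma Fm_rec:
  assumes refl: "\<forall>x\<in>A. le x x"
    and trans: "\<forall>x\<in>A. \<forall>y\<in>A. \<forall>z\<in>A. le x y \<and> le y z \<longrightarrow> le x z"
    and fin: "finite A"
    and x: "x \<in> A" and xmax: "\<forall>y\<in>A. le x y \<longrightarrow> y = x"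
  shows "Fm A le h (Suc m) = Fm (A - {x}) le h (Suc m) + qvar ^ (h x) * Fm {y\<in>A. le y x} le h m"
proof -
  define MC where "MC = multichains A le (Suc m)"
  define D where "D = {y\<in>A. le y x}"
  define ext :: "(nat \<Rightarrow> 'a) \<Rightarrow> nat \<Rightarrow> 'a" where "ext e' = e'(m := x)" for e'
  define w where "w e = qvar ^ (\<Sum>i<Suc m. h (e i))" for e
  have finMC: "finite MC" unfolding MC_def using fin by (rule mc_finite)
  have S1: "{e\<in>MC. e m \<noteq> x} = multichains (A - {x}) le (Suc m)"
  proof
    show "{e\<in>MC. e m \<noteq> x} \<subseteq> multichains (A - {x}) le (Suc m)"
    proof
      fix e assume "e \<in> {e\<in>MC. e m \<noteq> x}"
      hence e: "e \<in> MC" "e m \<noteq> x" by auto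
      have "e i \<noteq> x" if "i < Suc m" for i
      proof
        assume "e i = x"
        hence "le x (e m)" using mc_trans[OF refl trans e(1)[unfolded MC_def], of i m] that by auto
        moreover have "e m \<in> A" using e unfolding MC_def multichains_def by auto
        ultimately show False using xmax e(2) by auto
      qed
      thus "e \<in> multichains (A - {x}) le (Suc m)" using e unfolding MC_def multichains_def by auto
    qed
    show "multichains (A - {x}) le (Suc m) \<subseteq> {e\<in>MC. e m \<noteq> x}"
      unfolding MC_def multichains_def by auto
  qed
  have S2: "{e\<in>MC. e m = x} = ext ` multichains D le m"
  proof
    show "{e\<in>MC. e m = x} \<subseteq> ext ` multichains D le m"
    proof
      fix e assume "e \<in> {e\<in>MC. e m = x}"
      hence e: "e \<in> MC" "e m = x" by auto
      have "restrict e {..<m} \<in> multichains D le m"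
      proof -
        have "e i \<in> D" if "i < m" for i
          using mc_trans[OF refl trans e(1)[unfolded MC_def], of i m] that e
          unfolding D_def MC_def multichains_def by auto
        hence "restrict e {..<m} \<in> {..<m} \<rightarrow>\<^sub>E D" by (simp add: restrict_PiE_iff)
        moreover have "\<forall>i. Suc i < m \<longrightarrow> le (restrict e {..<m} i) (restrict e {..<m} (Suc i))"
        proof (intro allI impI)
          fix i assume i: "Suc i < m"
          have "le (e i) (e (Suc i))" using e(1) i unfolding MC_def multichains_def by simp
          thus "le (restrict e {..<m} i) (restrict e {..<m} (Suc i))" using i by simp
        qed
        ultimately show ?thesis unfolding multichains_def by blast
      qed
      moreover have "e = ext (restrict e {..<m})"
      proof
        fix i
        have ePi: "e \<in> {..<Suc m} \<rightarrow>\<^sub>E A" using e(1) unfolding MC_def multichains_def by blast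
        show "e i = ext (restrict e {..<m}) i"
        proof (cases "i = m")
          case True thus ?thesis using e(2) unfolding ext_def by simp
        next
          case False
          show ?thesis
          proof (cases "i < m")
            case True thus ?thesis using False unfolding ext_def by simp
          next
            case F2: False
            hence "i \<notin> {..<Suc m}" using False by simp
            hence "e i = undefined" using ePi by (rule PiE_arb[rotated])
            thus ?thesis using False F2 unfolding ext_def by simp
          qed
        qed
      qed
      ultimately show "e \<in> ext ` multichains D le m" by blast
    qed
    show "ext ` multichains D le m \<subseteq> {e\<in>MC. e m = x}"
    proof
      fix e assume "e \<in> ext ` multichains D le m"
      then obtain e' where e': "e' \<in> multichains D le m" "e = ext e'" by auto
      have "e \<in> {..<Suc m} \<rightarrow>\<^sub>E A"
        using e' x unfolding ext_def multichains_def D_def by (auto simp: less_Suc_eq)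
      moreover have "le (e i) (e (Suc i))" if "Suc i < Suc m" for i
      proof (cases "Suc i < m")
        case True thus ?thesis using e' unfolding ext_def multichains_def by auto
      next
        case False
        hence "Suc i = m" using that by auto
        thus ?thesis using e' unfolding ext_def multichains_def D_def by auto
      qed
      moreover have "e m = x" using e' unfolding ext_def by auto
      ultimately show "e \<in> {e\<in>MC. e m = x}" unfolding MC_def multichains_def by auto
    qed
  qed
  have inj: "inj_on ext (multichains D le m)"
  proof (rule inj_onI)
    fix a b assume ab: "a \<in> multichains D le m" "b \<in> multichains D le m" "ext a = ext b"
    show "a = b"
    proof
      fix i show "a i = b i"
      proof (cases "i = m")
        case True
        have "a \<in> {..<m} \<rightarrow>\<^sub>E D" "b \<in> {..<m} \<rightarrow>\<^sub>E D" using ab unfolding multichains_def by auto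
        hence "a m = undefined" "b m = undefined" using True by (auto intro: PiE_arb)
        thus ?thesis using True by simp
      next
        case False thus ?thesis using ab(3) unfolding ext_def by (metis fun_upd_other)
      qed
    qed
  qed
  have "Fm A le h (Suc m) = sum w MC" unfolding Fm_def MC_def w_def by simp
  also have "\<dots> = sum w {e\<in>MC. e m \<noteq> x} + sum w {e\<in>MC. e m = x}"
  proof -
    have "sum w ({e\<in>MC. e m \<noteq> x} \<union> {e\<in>MC. e m = x}) = sum w {e\<in>MC. e m \<noteq> x} + sum w {e\<in>MC. e m = x}"
      by (rule sum.union_disjoint) (use finMC in auto)
    moreover have "{e\<in>MC. e m \<noteq> x} \<union> {e\<in>MC. e m = x} = MC" by blast
    ultimately show ?thesis by simp
  qed
  also have "sum w {e\<in>MC. e m \<noteq> x} = Fm (A - {x}) le h (Suc m)"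
    unfolding S1 Fm_def w_def by simp
  also have "sum w {e\<in>MC. e m = x} = sum (w \<circ> ext) (multichains D le m)"
    unfolding S2 by (rule sum.reindex[OF inj])
  also have "\<dots> = (\<Sum>e\<in>multichains D le m. qvar ^ (h x) * qvar ^ (\<Sum>i<m. h (e i)))"
  proof (rule sum.cong[OF HOL.refl])
    fix e assume "e \<in> multichains D le m"
    have "(\<Sum>i<Suc m. h (ext e i)) = h x + (\<Sum>i<m. h (e i))"
      unfolding ext_def by (simp add: sum.lessThan_Suc)
    thus "(w \<circ> ext) e = qvar ^ (h x) * qvar ^ (\<Sum>i<m. h (e i))"
      by (simp add: w_def power_add)
  qed
  also have "\<dots> = qvar ^ (h x) * Fm {y\<in>A. le y x} le h m"
    unfolding Fm_def D_def by (simp add: sum_distrib_left)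
  finally show ?thesis .
qed


lemma fp_fin: "finite_poset A le \<Longrightarrow> finite A"
  unfolding finite_poset_def by (rule conjunct1)
lemma fp_refl: "finite_poset A le \<Longrightarrow> \<forall>x\<in>A. le x x"
  unfolding finite_poset_def by (rule conjunct1[OF conjunct2])
lemma fp_antis: "finite_poset A le \<Longrightarrow> \<forall>x\<in>A. \<forall>y\<in>A. le x y \<and> le y x \<longrightarrow> x = y"
  unfolding finite_poset_def by (rule conjunct1[OF conjunct2[OF conjunct2]])
lemma fp_trans: "finite_poset A le \<Longrightarrow> \<forall>x\<in>A. \<forall>y\<in>A. \<forall>z\<in>A. le x y \<and> le y z \<longrightarrow> le x z"
  unfolding finite_poset_def by (rule conjunct2[OF conjunct2[OF conjunct2]])

lemma strict_height:
  assumes P: "finite_poset P le" and H: "height_function P le h"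
  shows "x \<in> P \<Longrightarrow> y \<in> P \<Longrightarrow> le x y \<Longrightarrow> x \<noteq> y \<Longrightarrow> h x < h y"
proof (induction "card {z\<in>P. le x z \<and> le z y}" arbitrary: x y rule: less_induct)
  case less
  have fin: "finite P" using fp_fin[OF P] .
  have antis: "\<forall>x\<in>P. \<forall>y\<in>P. le x y \<and> le y x \<longrightarrow> x = y" using fp_antis[OF P] .
  have transP: "\<forall>x\<in>P. \<forall>y\<in>P. \<forall>z\<in>P. le x y \<and> le y z \<longrightarrow> le x z" using fp_trans[OF P] .
  have reflP: "\<forall>x\<in>P. le x x" using fp_refl[OF P] .
  show ?case
  proof (cases "covers P le y x")
    case True thus ?thesis using H less.prems unfolding height_function_def by auto
  next
    case False
    then obtain z where z: "z \<in> P" "le x z" "le z y" "z \<noteq> x" "z \<noteq> y"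
      using less.prems unfolding covers_def by auto
    have zP: "z \<in> P" and xP: "x \<in> P" and yP: "y \<in> P" using z less.prems by auto
    have "{w\<in>P. le x w \<and> le w z} \<subset> {w\<in>P. le x w \<and> le w y}"
    proof
      show "{w\<in>P. le x w \<and> le w z} \<subseteq> {w\<in>P. le x w \<and> le w y}"
      proof
        fix w assume w: "w \<in> {w\<in>P. le x w \<and> le w z}"
        hence "le w y" using transP[rule_format, of w z y] zP yP z(3) by simp
        thus "w \<in> {w\<in>P. le x w \<and> le w y}" using w by simp
      qed
      have "\<not> le y z" using antis[rule_format, of y z] yP zP z(3) z(5) by auto
      hence "y \<notin> {w\<in>P. le x w \<and> le w z}" by simp
      moreover have "y \<in> {w\<in>P. le x w \<and> le w y}" using less.prems reflP by simp
      ultimately show "{w\<in>P. le x w \<and> le w z} \<noteq> {w\<in>P. le x w \<and> le w y}" by blast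
    qed
    hence c1: "card {w\<in>P. le x w \<and> le w z} < card {w\<in>P. le x w \<and> le w y}"
      using fin by (intro psubset_card_mono) auto
    have "{w\<in>P. le z w \<and> le w y} \<subset> {w\<in>P. le x w \<and> le w y}"
    proof
      show "{w\<in>P. le z w \<and> le w y} \<subseteq> {w\<in>P. le x w \<and> le w y}"
      proof
        fix w assume w: "w \<in> {w\<in>P. le z w \<and> le w y}"
        hence "le x w" using transP[rule_format, of x z w] zP xP z(2) by simp
        thus "w \<in> {w\<in>P. le x w \<and> le w y}" using w by simp
      qed
      have "\<not> le z x" using antis[rule_format, of x z] xP zP z(2) z(4) by auto
      hence "x \<notin> {w\<in>P. le z w \<and> le w y}" by simp
      moreover have "x \<in> {w\<in>P. le x w \<and> le w y}" using less.prems reflP by simp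
      ultimately show "{w\<in>P. le z w \<and> le w y} \<noteq> {w\<in>P. le x w \<and> le w y}" by blast
    qed
    hence c2: "card {w\<in>P. le z w \<and> le w y} < card {w\<in>P. le x w \<and> le w y}"
      using fin by (intro psubset_card_mono) auto
    have "h x < h z" using less.hyps[OF c1] z less.prems by auto
    moreover have "h z < h y" using less.hyps[OF c2] z less.prems by auto
    ultimately show ?thesis by simp
  qed
qed

lemma expo_cong: "expo B f \<Longrightarrow> (\<forall>m\<ge>1. f m = g m) \<Longrightarrow> expo B g"
  unfolding expo_def by auto

lemma G_closed:
  assumes Fd: "\<forall>m\<ge>1. Fd m = (\<Sum>s<R. c s * qvar ^ (s * m))"
    and G0: "G 0 = 1" and GS: "\<forall>m. G (Suc m) = Fd (Suc m) + qvar ^ R * G m"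
  shows "\<exists>\<alpha> c'. \<forall>m. G m = \<alpha> * qvar ^ (R * m) + (\<Sum>s<R. c' s * qvar ^ (s * m))"
proof -
  define c' where "c' s = c s * qvar ^ s / (qvar ^ s - qvar ^ R)" for s
  define \<alpha> where "\<alpha> = 1 - (\<Sum>s<R. c' s)"
  have key: "c s * qvar ^ (s * Suc m) + qvar ^ R * (c' s * qvar ^ (s * m)) = c' s * qvar ^ (s * Suc m)"
    if "s < R" for s m
  proof -
    have ne: "qvar ^ s - qvar ^ R \<noteq> 0" using qvar_pow_inj[of s R] that by auto
    have "c' s * (qvar ^ s - qvar ^ R) = c s * qvar ^ s" unfolding c'_def using ne by simp
    hence "c s * qvar ^ s + qvar ^ R * c' s = c' s * qvar ^ s" by (simp add: algebra_simps)
    hence "(c s * qvar ^ s + qvar ^ R * c' s) * qvar ^ (s * m) = c' s * qvar ^ s * qvar ^ (s * m)"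
      by simp
    thus ?thesis by (simp add: algebra_simps power_add)
  qed
  have "G m = \<alpha> * qvar ^ (R * m) + (\<Sum>s<R. c' s * qvar ^ (s * m))" for m
  proof (induction m)
    case 0 thus ?case using G0 by (simp add: \<alpha>_def)
  next
    case (Suc m)
    have "G (Suc m) = (\<Sum>s<R. c s * qvar ^ (s * Suc m)) + qvar ^ R * (\<alpha> * qvar ^ (R * m) + (\<Sum>s<R. c' s * qvar ^ (s * m)))"
      using GS Fd Suc.IH by simp
    also have "\<dots> = \<alpha> * qvar ^ (R * Suc m) + (\<Sum>s<R. c s * qvar ^ (s * Suc m) + qvar ^ R * (c' s * qvar ^ (s * m)))"
      by (simp add: sum.distrib sum_distrib_left algebra_simps power_add)
    also have "\<dots> = \<alpha> * qvar ^ (R * Suc m) + (\<Sum>s<R. c' s * qvar ^ (s * Suc m))"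
      using key by simp
    finally show ?case .
  qed
  thus ?thesis by blast
qed

lemma main_expo:
  assumes P: "finite_poset P le"
    and strict: "\<forall>x\<in>P. \<forall>y\<in>P. le x y \<and> x \<noteq> y \<longrightarrow> h x < h y"
  shows "A \<subseteq> P \<Longrightarrow> (\<forall>a\<in>A. h a < B) \<Longrightarrow> expo B (Fm A le h)"
proof (induction "card A" arbitrary: A B rule: less_induct)
  case less
  have finP: "finite P" using fp_fin[OF P] .
  have transP: "\<forall>x\<in>P. \<forall>y\<in>P. \<forall>z\<in>P. le x y \<and> le y z \<longrightarrow> le x z" using fp_trans[OF P] .
  have reflP: "\<forall>x\<in>P. le x x" using fp_refl[OF P] .
  have finA: "finite A" using less.prems(1) finP by (rule finite_subset)
  show ?case
  proof (cases "A = {}")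
    case True
    have "\<forall>m\<ge>1. Fm A le h m = (\<Sum>s<B. 0 * qvar ^ (s * m))"
    proof (intro allI impI)
      fix m :: nat assume "m \<ge> 1"
      hence "Fm A le h m = 0" unfolding True by (rule Fm_empty)
      thus "Fm A le h m = (\<Sum>s<B. 0 * qvar ^ (s * m))" by simp
    qed
    thus ?thesis unfolding expo_def by (rule exI[where x="\<lambda>_. 0"])
  next
    case False
    obtain x where x: "x \<in> A" "\<forall>y\<in>A. h y \<le> h x"
    proof -
      have "Max (h ` A) \<in> h ` A" using False finA by auto
      then obtain x where "x \<in> A" "h x = Max (h ` A)" by auto
      moreover have "\<forall>y\<in>A. h y \<le> Max (h ` A)" using finA by auto
      ultimately show ?thesis using that by auto
    qed
    have reflA: "\<forall>x\<in>A. le x x" using reflP less.prems by auto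
    have transA: "\<forall>u\<in>A. \<forall>v\<in>A. \<forall>w\<in>A. le u v \<and> le v w \<longrightarrow> le u w"
    proof (intro ballI impI)
      fix u v w assume uvw: "u \<in> A" "v \<in> A" "w \<in> A" "le u v \<and> le v w"
      have "u \<in> P" "v \<in> P" "w \<in> P" using uvw less.prems by auto
      thus "le u w" using transP[rule_format, of u v w] uvw(4) by simp
    qed
    have xmax: "\<forall>y\<in>A. le x y \<longrightarrow> y = x"
    proof (intro ballI impI)
      fix y assume y: "y \<in> A" "le x y"
      show "y = x"
      proof (rule ccontr)
        assume "y \<noteq> x"
        moreover have "x \<in> P" "y \<in> P" using x(1) y(1) less.prems by auto
        ultimately have "h x < h y" using strict y(2) by metis
        thus False using x(2) y(1) by (meson leD)
      qed
    qed
    define D' where "D' = {y\<in>A. le y x}"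
    define D where "D = D' - {x}"
    have recA: "Fm A le h (Suc m) = Fm (A - {x}) le h (Suc m) + qvar ^ (h x) * Fm D' le h m" for m
      unfolding D'_def by (rule Fm_rec[OF reflA transA finA x(1) xmax])
    have xD': "x \<in> D'" using x reflA unfolding D'_def by auto
    have D'sub: "D' \<subseteq> A" unfolding D'_def by auto
    have recD': "Fm D' le h (Suc m) = Fm D le h (Suc m) + qvar ^ (h x) * Fm D' le h m" for m
    proof -
      have "{y\<in>D'. le y x} = D'" unfolding D'_def by auto
      moreover have "Fm D' le h (Suc m) = Fm (D' - {x}) le h (Suc m) + qvar ^ (h x) * Fm {y\<in>D'. le y x} le h m"
      proof (rule Fm_rec)
        show "\<forall>x\<in>D'. le x x" using reflA D'sub by blast
        show "\<forall>u\<in>D'. \<forall>v\<in>D'. \<forall>w\<in>D'. le u v \<and> le v w \<longrightarrow> le u w"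
        proof (intro ballI impI)
          fix u v w assume uvw: "u \<in> D'" "v \<in> D'" "w \<in> D'" "le u v \<and> le v w"
          have "u \<in> A" "v \<in> A" "w \<in> A" using uvw D'sub by auto
          thus "le u w" using transA[rule_format, of u v w] uvw(4) by simp
        qed
        show "finite D'" using finA D'sub by (rule finite_subset[rotated])
        show "x \<in> D'" by (rule xD')
        show "\<forall>y\<in>D'. le x y \<longrightarrow> y = x" using xmax D'sub by auto
      qed
      ultimately show ?thesis unfolding D_def by simp
    qed
    have cardD: "card D < card A"
      using finA D'sub xD' unfolding D_def by (intro psubset_card_mono) auto
    have "expo (h x) (Fm D le h)"
    proof (rule less.hyps[OF cardD])
      show "D \<subseteq> P" using D'sub less.prems unfolding D_def by auto
      show "\<forall>a\<in>D. h a < h x" using strict less.prems x unfolding D_def D'_def by auto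
    qed
    then obtain c where c: "\<forall>m\<ge>1. Fm D le h m = (\<Sum>s<h x. c s * qvar ^ (s * m))"
      unfolding expo_def by auto
    obtain \<alpha> c' where G: "\<forall>m. Fm D' le h m = \<alpha> * qvar ^ (h x * m) + (\<Sum>s<h x. c' s * qvar ^ (s * m))"
      using G_closed[OF c Fm_0 allI[OF recD']] by blast
    have cardA': "card (A - {x}) < card A" using finA x by (intro psubset_card_mono) auto
    have e1: "expo B (Fm (A - {x}) le h)"
      by (rule less.hyps[OF cardA']) (use less.prems in auto)
    have hxB: "h x < B" using less.prems x by auto
    have e2: "expo B (\<lambda>m. \<alpha> * qvar ^ (h x * m))" by (rule expo_single[OF hxB])
    have e3: "expo B (\<lambda>m. \<Sum>s<h x. (c' s * qvar ^ h x / qvar ^ s) * qvar ^ (s * m))"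
    proof (rule expo_mono[OF _ less_imp_le[OF hxB]])
      show "expo (h x) (\<lambda>m. \<Sum>s<h x. (c' s * qvar ^ h x / qvar ^ s) * qvar ^ (s * m))"
        unfolding expo_def by (rule exI[where x="\<lambda>s. c' s * qvar ^ h x / qvar ^ s"]) simp
    qed
    have e4: "expo B (\<lambda>m. Fm (A - {x}) le h m + (\<alpha> * qvar ^ (h x * m) + (\<Sum>s<h x. (c' s * qvar ^ h x / qvar ^ s) * qvar ^ (s * m))))"
      by (intro expo_add e1 e2 e3)
    show ?thesis
    proof (rule expo_cong[OF e4], intro allI impI)
      fix m :: nat assume "m \<ge> 1"
      then obtain k where k: "m = Suc k" by (cases m) auto
      have t: "c' s * qvar ^ h x / qvar ^ s * qvar ^ (s * Suc k) = qvar ^ h x * (c' s * qvar ^ (s * k))" for s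
      proof -
        have e: "qvar ^ (s * Suc k) = qvar ^ s * qvar ^ (s * k)" by (simp add: power_add)
        have S: "qvar ^ s \<noteq> 0" using qvar_nz by simp
        show ?thesis unfolding e using S qvar_nz by (simp add: field_simps)
      qed
      have t2: "\<alpha> * qvar ^ (h x * Suc k) = qvar ^ h x * (\<alpha> * qvar ^ (h x * k))"
        by (simp add: power_add)
      show "Fm (A - {x}) le h m + (\<alpha> * qvar ^ (h x * m) + (\<Sum>s<h x. (c' s * qvar ^ h x / qvar ^ s) * qvar ^ (s * m))) = Fm A le h m"
        unfolding k recA G[rule_format] t t2 by (simp only: sum_distrib_left distrib_left)
    qed
  qed
qed



lemma Fm_prod:
  "Fm (P \<times> Q) (prod_le leP leQ) (\<lambda>(a, b). g a + h b) m = Fm P leP g m * Fm Q leQ h m"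
proof -
  define pr :: "(nat \<Rightarrow> 'a) \<times> (nat \<Rightarrow> 'b) \<Rightarrow> nat \<Rightarrow> 'a \<times> 'b"
    where "pr p = (\<lambda>i. if i < m then (fst p i, snd p i) else undefined)" for p
  define MP where "MP = multichains P leP m"
  define MQ where "MQ = multichains Q leQ m"
  have inj: "inj_on pr (MP \<times> MQ)"
  proof (rule inj_onI)
    fix p p' assume p: "p \<in> MP \<times> MQ" "p' \<in> MP \<times> MQ" "pr p = pr p'"
    have a: "fst p \<in> {..<m} \<rightarrow>\<^sub>E P" "fst p' \<in> {..<m} \<rightarrow>\<^sub>E P"
      "snd p \<in> {..<m} \<rightarrow>\<^sub>E Q" "snd p' \<in> {..<m} \<rightarrow>\<^sub>E Q"
      using p(1,2) unfolding MP_def MQ_def multichains_def by auto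
    have "fst p i = fst p' i \<and> snd p i = snd p' i" for i
    proof (cases "i < m")
      case True
      have "pr p i = pr p' i" using p(3) by (rule fun_cong)
      hence "(fst p i, snd p i) = (fst p' i, snd p' i)" using True unfolding pr_def by (simp only: if_True)
      thus ?thesis by (rule iffD1[OF prod.inject])
    next
      case False
      hence i: "i \<notin> {..<m}" by simp
      have "fst p i = undefined" by (rule PiE_arb[OF a(1) i])
      moreover have "fst p' i = undefined" by (rule PiE_arb[OF a(2) i])
      moreover have "snd p i = undefined" by (rule PiE_arb[OF a(3) i])
      moreover have "snd p' i = undefined" by (rule PiE_arb[OF a(4) i])
      ultimately show ?thesis by simp
    qed
    thus "p = p'" by (simp add: prod_eq_iff fun_eq_iff)
  qed
  have img: "multichains (P \<times> Q) (prod_le leP leQ) m = pr ` (MP \<times> MQ)"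
  proof
    show "pr ` (MP \<times> MQ) \<subseteq> multichains (P \<times> Q) (prod_le leP leQ) m"
    proof
      fix e assume "e \<in> pr ` (MP \<times> MQ)"
      then obtain p where p: "p \<in> MP \<times> MQ" "e = pr p" by blast
      have "e \<in> {..<m} \<rightarrow>\<^sub>E P \<times> Q"
        using p unfolding pr_def MP_def MQ_def multichains_def by (auto simp: PiE_iff extensional_def)
      moreover have "prod_le leP leQ (e i) (e (Suc i))" if "Suc i < m" for i
        using p that unfolding pr_def MP_def MQ_def multichains_def prod_le_def by auto
      ultimately show "e \<in> multichains (P \<times> Q) (prod_le leP leQ) m"
        unfolding multichains_def by blast
    qed
    show "multichains (P \<times> Q) (prod_le leP leQ) m \<subseteq> pr ` (MP \<times> MQ)"
    proof
      fix e assume e: "e \<in> multichains (P \<times> Q) (prod_le leP leQ) m"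
      have ePi: "e \<in> {..<m} \<rightarrow>\<^sub>E P \<times> Q" using e unfolding multichains_def by blast
      have ch: "prod_le leP leQ (e i) (e (Suc i))" if "Suc i < m" for i
        using e that unfolding multichains_def by blast
      define e1 where "e1 = (\<lambda>i. if i < m then fst (e i) else undefined)"
      define e2 where "e2 = (\<lambda>i. if i < m then snd (e i) else undefined)"
      have "e1 \<in> MP"
        using ePi ch unfolding MP_def multichains_def e1_def prod_le_def by (auto simp: PiE_iff extensional_def mem_Times_iff)
      moreover have "e2 \<in> MQ"
        using ePi ch unfolding MQ_def multichains_def e2_def prod_le_def by (auto simp: PiE_iff extensional_def mem_Times_iff)
      moreover have "e = pr (e1, e2)"
      proof
        fix i show "e i = pr (e1, e2) i"
        proof (cases "i < m")
          case True thus ?thesis unfolding pr_def e1_def e2_def by simp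
        next
          case False
          hence "e i = undefined" using PiE_arb[OF ePi] by simp
          thus ?thesis using False unfolding pr_def by simp
        qed
      qed
      ultimately show "e \<in> pr ` (MP \<times> MQ)" by blast
    qed
  qed
  have "Fm (P \<times> Q) (prod_le leP leQ) (\<lambda>(a, b). g a + h b) m
      = (\<Sum>e\<in>pr ` (MP \<times> MQ). qvar ^ (\<Sum>i<m. (\<lambda>(a, b). g a + h b) (e i)))"
    unfolding Fm_def img ..
  also have "\<dots> = (\<Sum>p\<in>MP \<times> MQ. qvar ^ (\<Sum>i<m. (\<lambda>(a, b). g a + h b) (pr p i)))"
    by (subst sum.reindex[OF inj]) simp
  also have "\<dots> = (\<Sum>p\<in>MP \<times> MQ. qvar ^ (\<Sum>i<m. g (fst p i)) * qvar ^ (\<Sum>i<m. h (snd p i)))"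
  proof (rule sum.cong[OF HOL.refl])
    fix p :: "(nat \<Rightarrow> 'a) \<times> (nat \<Rightarrow> 'b)"
    have "(\<Sum>i<m. (\<lambda>(a, b). g a + h b) (pr p i)) = (\<Sum>i<m. g (fst p i) + h (snd p i))"
      by (rule sum.cong) (auto simp: pr_def)
    thus "qvar ^ (\<Sum>i<m. (\<lambda>(a, b). g a + h b) (pr p i)) = qvar ^ (\<Sum>i<m. g (fst p i)) * qvar ^ (\<Sum>i<m. h (snd p i))"
      by (simp add: sum.distrib power_add)
  qed
  also have "\<dots> = (\<Sum>e1\<in>MP. \<Sum>e2\<in>MQ. qvar ^ (\<Sum>i<m. g (e1 i)) * qvar ^ (\<Sum>i<m. h (e2 i)))"
    by (rule sum.cartesian_product[symmetric, unfolded split_def])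
  also have "\<dots> = Fm P leP g m * Fm Q leQ h m"
    unfolding Fm_def MP_def MQ_def by (simp add: sum_product)
  finally show ?thesis .
qed



lemma sum_le_side: "sum_le leP leQ u v \<Longrightarrow> isl u = isl v"
  by (cases u; cases v) auto

lemma mc_side:
  assumes e: "e \<in> multichains (P <+> Q) (sum_le leP leQ) m"
  shows "i < m \<Longrightarrow> isl (e i) = isl (e 0)"
proof (induction i)
  case 0 show ?case by simp
next
  case (Suc i)
  have "sum_le leP leQ (e i) (e (Suc i))" using e Suc.prems unfolding multichains_def by blast
  hence "isl (e i) = isl (e (Suc i))" by (rule sum_le_side)
  thus ?case using Suc by simp
qed

lemma Fm_sum:
  assumes finP: "finite P" and finQ: "finite Q" and m: "m \<ge> 1"
  shows "Fm (P <+> Q) (sum_le leP leQ) (case_sum g h) m = Fm P leP g m + Fm Q leQ h m"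
proof -
  define inl :: "(nat \<Rightarrow> 'a) \<Rightarrow> nat \<Rightarrow> 'a + 'b" where "inl e = (\<lambda>i. if i < m then Inl (e i) else undefined)" for e
  define inr :: "(nat \<Rightarrow> 'b) \<Rightarrow> nat \<Rightarrow> 'a + 'b" where "inr e = (\<lambda>i. if i < m then Inr (e i) else undefined)" for e
  define MP where "MP = multichains P leP m"
  define MQ where "MQ = multichains Q leQ m"
  define MC where "MC = multichains (P <+> Q) (sum_le leP leQ) m"
  have m0: "0 < m" using m by simp
  have injl: "inj_on inl MP"
  proof (rule inj_onI)
    fix a b assume ab: "a \<in> MP" "b \<in> MP" "inl a = inl b"
    have a: "a \<in> {..<m} \<rightarrow>\<^sub>E P" "b \<in> {..<m} \<rightarrow>\<^sub>E P" using ab unfolding MP_def multichains_def by auto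
    show "a = b"
    proof
      fix i show "a i = b i"
      proof (cases "i < m")
        case True
        have "inl a i = inl b i" using ab(3) by (rule fun_cong)
        thus ?thesis using True unfolding inl_def by simp
      next
        case False
        hence i: "i \<notin> {..<m}" by simp
        show ?thesis using PiE_arb[OF a(1) i] PiE_arb[OF a(2) i] by simp
      qed
    qed
  qed
  have injr: "inj_on inr MQ"
  proof (rule inj_onI)
    fix a b assume ab: "a \<in> MQ" "b \<in> MQ" "inr a = inr b"
    have a: "a \<in> {..<m} \<rightarrow>\<^sub>E Q" "b \<in> {..<m} \<rightarrow>\<^sub>E Q" using ab unfolding MQ_def multichains_def by auto
    show "a = b"
    proof
      fix i show "a i = b i"
      proof (cases "i < m")
        case True
        have "inr a i = inr b i" using ab(3) by (rule fun_cong)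
        thus ?thesis using True unfolding inr_def by simp
      next
        case False
        hence i: "i \<notin> {..<m}" by simp
        show ?thesis using PiE_arb[OF a(1) i] PiE_arb[OF a(2) i] by simp
      qed
    qed
  qed
  have subl: "inl ` MP \<subseteq> MC"
  proof
    fix e assume "e \<in> inl ` MP"
    then obtain a where a: "a \<in> MP" "e = inl a" by blast
    have "e \<in> {..<m} \<rightarrow>\<^sub>E P <+> Q"
      using a unfolding inl_def MP_def multichains_def by (auto simp: PiE_iff extensional_def)
    moreover have "sum_le leP leQ (e i) (e (Suc i))" if "Suc i < m" for i
      using a that unfolding inl_def MP_def multichains_def by auto
    ultimately show "e \<in> MC" unfolding MC_def multichains_def by blast
  qed
  have subr: "inr ` MQ \<subseteq> MC"
  proof
    fix e assume "e \<in> inr ` MQ"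
    then obtain a where a: "a \<in> MQ" "e = inr a" by blast
    have "e \<in> {..<m} \<rightarrow>\<^sub>E P <+> Q"
      using a unfolding inr_def MQ_def multichains_def by (auto simp: PiE_iff extensional_def)
    moreover have "sum_le leP leQ (e i) (e (Suc i))" if "Suc i < m" for i
      using a that unfolding inr_def MQ_def multichains_def by auto
    ultimately show "e \<in> MC" unfolding MC_def multichains_def by blast
  qed
  have sup: "MC \<subseteq> inl ` MP \<union> inr ` MQ"
  proof
    fix e assume e: "e \<in> MC"
    have ePi: "e \<in> {..<m} \<rightarrow>\<^sub>E P <+> Q" using e unfolding MC_def multichains_def by blast
    have ch: "sum_le leP leQ (e i) (e (Suc i))" if "Suc i < m" for i
      using e that unfolding MC_def multichains_def by blast
    have side: "isl (e i) = isl (e 0)" if "i < m" for i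
      using mc_side[OF e[unfolded MC_def] that] .
    have undef: "e i = undefined" if "\<not> i < m" for i
      using PiE_arb[OF ePi] that by simp
    show "e \<in> inl ` MP \<union> inr ` MQ"
    proof (cases "isl (e 0)")
      case True
      define a where "a = (\<lambda>i. if i < m then projl (e i) else undefined)"
      have L: "e i = Inl (projl (e i))" if "i < m" for i
        using side[OF that] True by (cases "e i") auto
      have "e = inl a"
      proof
        fix i show "e i = inl a i"
          using L undef unfolding inl_def a_def by (cases "i < m") auto
      qed
      moreover have "a \<in> MP"
      proof -
        have "projl (e i) \<in> P" if "i < m" for i
        proof -
          have "e i \<in> P <+> Q" using ePi that by auto
          thus ?thesis using L[OF that] by (metis Inl_inject PlusE sum.distinct(1))
        qed
        hence "a \<in> {..<m} \<rightarrow>\<^sub>E P" unfolding a_def by (auto simp: PiE_iff extensional_def)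
        moreover have "leP (a i) (a (Suc i))" if "Suc i < m" for i
        proof -
          have "sum_le leP leQ (Inl (projl (e i))) (Inl (projl (e (Suc i))))"
            using ch[OF that] L[of i] L[of "Suc i"] that by simp
          thus ?thesis using that unfolding a_def by simp
        qed
        ultimately show ?thesis unfolding MP_def multichains_def by blast
      qed
      ultimately show ?thesis by blast
    next
      case False
      define a where "a = (\<lambda>i. if i < m then projr (e i) else undefined)"
      have R: "e i = Inr (projr (e i))" if "i < m" for i
        using side[OF that] False by (cases "e i") auto
      have "e = inr a"
      proof
        fix i show "e i = inr a i"
          using R undef unfolding inr_def a_def by (cases "i < m") auto
      qed
      moreover have "a \<in> MQ"
      proof -
        have "projr (e i) \<in> Q" if "i < m" for i
        proof -
          have "e i \<in> P <+> Q" using ePi that by auto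
          thus ?thesis using R[OF that] by (metis Inr_inject PlusE sum.distinct(1))
        qed
        hence "a \<in> {..<m} \<rightarrow>\<^sub>E Q" unfolding a_def by (auto simp: PiE_iff extensional_def)
        moreover have "leQ (a i) (a (Suc i))" if "Suc i < m" for i
        proof -
          have "sum_le leP leQ (Inr (projr (e i))) (Inr (projr (e (Suc i))))"
            using ch[OF that] R[of i] R[of "Suc i"] that by simp
          thus ?thesis using that unfolding a_def by simp
        qed
        ultimately show ?thesis unfolding MQ_def multichains_def by blast
      qed
      ultimately show ?thesis by blast
    qed
  qed
  have MCeq: "MC = inl ` MP \<union> inr ` MQ" using sup subl subr by blast
  have disj: "inl ` MP \<inter> inr ` MQ = {}"
  proof (rule ccontr)
    assume "inl ` MP \<inter> inr ` MQ \<noteq> {}"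
    then obtain a b where "inl a = inr b" by blast
    hence "inl a 0 = inr b 0" by simp
    thus False using m0 unfolding inl_def inr_def by simp
  qed
  have finMP: "finite MP" unfolding MP_def using finP by (rule mc_finite)
  have finMQ: "finite MQ" unfolding MQ_def using finQ by (rule mc_finite)
  define w where "w e = qvar ^ (\<Sum>i<m. case_sum g h (e i))" for e
  have "Fm (P <+> Q) (sum_le leP leQ) (case_sum g h) m = sum w MC"
    unfolding Fm_def MC_def w_def ..
  also have "\<dots> = sum w (inl ` MP) + sum w (inr ` MQ)"
    unfolding MCeq by (rule sum.union_disjoint) (use finMP finMQ disj in auto)
  also have "sum w (inl ` MP) = sum (w \<circ> inl) MP" by (rule sum.reindex[OF injl])
  also have "\<dots> = Fm P leP g m"
    unfolding Fm_def MP_def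
  proof (rule sum.cong[OF HOL.refl])
    fix e :: "nat \<Rightarrow> 'a"
    have "(\<Sum>i<m. case_sum g h (inl e i)) = (\<Sum>i<m. g (e i))"
      by (rule sum.cong) (auto simp: inl_def)
    thus "(w \<circ> inl) e = qvar ^ (\<Sum>i<m. g (e i))" by (simp add: w_def)
  qed
  also have "sum w (inr ` MQ) = sum (w \<circ> inr) MQ" by (rule sum.reindex[OF injr])
  also have "\<dots> = Fm Q leQ h m"
    unfolding Fm_def MQ_def
  proof (rule sum.cong[OF HOL.refl])
    fix e :: "nat \<Rightarrow> 'b"
    have "(\<Sum>i<m. case_sum g h (inr e i)) = (\<Sum>i<m. h (e i))"
      by (rule sum.cong) (auto simp: inr_def)
    thus "(w \<circ> inr) e = qvar ^ (\<Sum>i<m. h (e i))" by (simp add: w_def)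
  qed
  finally show ?thesis .
qed



lemma exists_Z:
  assumes P: "finite_poset P leP" and H: "height_function P leP g"
  shows "\<exists>Z. \<forall>n\<ge>2. poly Z (qint n) = Fm P leP g (n - 1)"
proof -
  have sP: "\<forall>x\<in>P. \<forall>y\<in>P. leP x y \<and> x \<noteq> y \<longrightarrow> g x < g y"
    using strict_height[OF P H] by blast
  have fin: "finite P" by (rule fp_fin[OF P])
  have "\<forall>a\<in>P. g a < Suc (Max (g ` P))"
  proof
    fix a assume "a \<in> P"
    hence "g a \<le> Max (g ` P)" using fin by (intro Max_ge) auto
    thus "g a < Suc (Max (g ` P))" by simp
  qed
  hence "expo (Suc (Max (g ` P))) (Fm P leP g)"
    by (rule main_expo[OF P sP subset_refl])
  thus ?thesis by (rule expo_poly)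
qed

theorem mainTheorem11:
  fixes P :: "'a set" and leP :: "'a \<Rightarrow> 'a \<Rightarrow> bool" and g :: "'a \<Rightarrow> nat"
    and Q :: "'b set" and leQ :: "'b \<Rightarrow> 'b \<Rightarrow> bool" and h :: "'b \<Rightarrow> nat"
  assumes "finite_poset P leP" and "height_function P leP g"
    and "finite_poset Q leQ" and "height_function Q leQ h"
  shows "qZeta (P \<times> Q) (prod_le leP leQ) (\<lambda>(a, b). g a + h b) = qZeta P leP g * qZeta Q leQ h \<and>
         qZeta (P <+> Q) (sum_le leP leQ) (case_sum g h) = qZeta P leP g + qZeta Q leQ h"
proof -
  obtain ZP where ZP: "\<forall>n\<ge>2. poly ZP (qint n) = Fm P leP g (n - 1)"
    using exists_Z[OF assms(1,2)] by blast
  obtain ZQ where ZQ: "\<forall>n\<ge>2. poly ZQ (qint n) = Fm Q leQ h (n - 1)"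
    using exists_Z[OF assms(3,4)] by blast
  have finP: "finite P" by (rule fp_fin[OF assms(1)])
  have finQ: "finite Q" by (rule fp_fin[OF assms(3)])
  have eP: "qZeta P leP g = ZP" by (rule qZeta_eq) (simp add: ZP chain_gen_Fm)
  have eQ: "qZeta Q leQ h = ZQ" by (rule qZeta_eq) (simp add: ZQ chain_gen_Fm)
  have e1: "qZeta (P \<times> Q) (prod_le leP leQ) (\<lambda>(a, b). g a + h b) = ZP * ZQ"
  proof (rule qZeta_eq, intro allI impI)
    fix n :: nat assume n: "n \<ge> 2"
    show "poly (ZP * ZQ) (qint n) = chain_gen (P \<times> Q) (prod_le leP leQ) (\<lambda>(a, b). g a + h b) n"
      unfolding chain_gen_Fm Fm_prod using ZP ZQ n by simp
  qed
  have e2: "qZeta (P <+> Q) (sum_le leP leQ) (case_sum g h) = ZP + ZQ"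
  proof (rule qZeta_eq, intro allI impI)
    fix n :: nat assume n: "n \<ge> 2"
    have n1: "n - 1 \<ge> 1" using n by simp
    have S: "Fm (P <+> Q) (sum_le leP leQ) (case_sum g h) (n - 1) = Fm P leP g (n - 1) + Fm Q leQ h (n - 1)"
      by (rule Fm_sum[OF finP finQ n1])
    show "poly (ZP + ZQ) (qint n) = chain_gen (P <+> Q) (sum_le leP leQ) (case_sum g h) n"
      unfolding chain_gen_Fm S using ZP ZQ n by simp
  qed
  show ?thesis using e1 e2 eP eQ by simp
qed


end
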